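(* Let $G$ be a strongly regular graph with parameters $(n,d,\lambda,\mu)$. If $\mathcal{P}_n,\mathcal{P}_{n-1},\dots,\mathcal{P}_k$ is a partial contraction sequence of $G$ of width at most $\operatorname{lb}_1(G)$, then $|P|\leq 2$ for every part $P\in\mathcal{P}_i$, for every $i$ with $k\leq i$ and $i\geq n-\lceil \operatorname{lb}_1(G)/2\rceil$.
   Context: All graphs are finite and simple. A graph of order $n$ is strongly regular with parameters $(n,d,\lambda,\mu)$ if it is $d$-regular and any two distinct adjacent vertices have exactly $\lambda$ common neighbors and any two distinct non-adjacent vertices have exactly $\mu$ common neighbors. For a partition $\mathcal{P}$ of $V(G)$, the quotient trigraph $G/\mathcal{P}$ has vertex set $\mathcal{P}$; two distinct parts $U,W$ are joined by a black edge if every pair $\{u,w\}$ with $u\in U,w\in W$ is an edge of $G$, are non-adjacent if no such pair is an edge, and are joined by a red edge otherwise; the red degree of a part is its number of incident red edges. A partial contraction sequence is a sequence $\mathcal{P}_n,\dots,\mathcal{P}_k$ of partitions of $V(G)$ where $\mathcal{P}_n$ is the partition into singletons and each $\mathcal{P}_i$ (which has $i$ parts) arises from $\mathcal{P}_{i+1}$ by merging two parts; its width is the maximum red degree over all $G/\mathcal{P}_i$. For $n\geq 2$, $\operatorname{lb}_1(G)$ is the minimum over all 2-element subsets $\{u,v\}\subseteq V(G)$ of the maximum red degree of $G/\mathcal{P}$ where $\mathcal{P}$ has $\{u,v\}$ as its only non-singleton part. *)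

theory Defs
  imports Complex_Main "HOL-Library.Disjoint_Sets"
begin

definition simple_graph :: "'a set \<Rightarrow> ('a \<Rightarrow> 'a \<Rightarrow> bool) \<Rightarrow> bool" where
  "simple_graph V E \<longleftrightarrow> finite V \<and> (\<forall>u v. E u v \<longrightarrow> E v u) \<and> (\<forall>v. \<not> E v v)
     \<and> (\<forall>u v. E u v \<longrightarrow> u \<in> V \<and> v \<in> V)"

definition strongly_regular ::
  "'a set \<Rightarrow> ('a \<Rightarrow> 'a \<Rightarrow> bool) \<Rightarrow> nat \<Rightarrow> nat \<Rightarrow> nat \<Rightarrow> nat \<Rightarrow> bool" where
  "strongly_regular V E n d lam mu \<longleftrightarrow> simple_graph V E \<and> card V = n
     \<and> (\<forall>v\<in>V. card {u\<in>V. E v u} = d)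
     \<and> (\<forall>u\<in>V. \<forall>v\<in>V. u \<noteq> v \<and> E u v \<longrightarrow> card {w\<in>V. E u w \<and> E v w} = lam)
     \<and> (\<forall>u\<in>V. \<forall>v\<in>V. u \<noteq> v \<and> \<not> E u v \<longrightarrow> card {w\<in>V. E u w \<and> E v w} = mu)"

definition red_edge :: "('a \<Rightarrow> 'a \<Rightarrow> bool) \<Rightarrow> 'a set \<Rightarrow> 'a set \<Rightarrow> bool" where
  "red_edge E U W \<longleftrightarrow> (\<exists>u\<in>U. \<exists>w\<in>W. E u w) \<and> (\<exists>u\<in>U. \<exists>w\<in>W. \<not> E u w)"

definition red_degree :: "('a \<Rightarrow> 'a \<Rightarrow> bool) \<Rightarrow> 'a set set \<Rightarrow> 'a set \<Rightarrow> nat" where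
  "red_degree E P U = card {W \<in> P. W \<noteq> U \<and> red_edge E U W}"

definition max_red_degree :: "('a \<Rightarrow> 'a \<Rightarrow> bool) \<Rightarrow> 'a set set \<Rightarrow> nat" where
  "max_red_degree E P = Max (insert 0 (red_degree E P ` P))"

definition singleton_partition :: "'a set \<Rightarrow> 'a set set" where
  "singleton_partition V = {{v} | v. v \<in> V}"

definition pair_partition :: "'a set \<Rightarrow> 'a \<Rightarrow> 'a \<Rightarrow> 'a set set" where
  "pair_partition V u v = insert {u, v} {{w} | w. w \<in> V - {u, v}}"

definition lb1 :: "'a set \<Rightarrow> ('a \<Rightarrow> 'a \<Rightarrow> bool) \<Rightarrow> nat" where
  "lb1 V E = Min {max_red_degree E (pair_partition V u v) | u v. u \<in> V \<and> v \<in> V \<and> u \<noteq> v}"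

text \<open>Partial contraction sequence P_n, ..., P_k (n = |V|), given as a function on
  indices, constrained only on {k..n}.\<close>
definition partial_contraction_sequence ::
  "'a set \<Rightarrow> (nat \<Rightarrow> 'a set set) \<Rightarrow> nat \<Rightarrow> bool" where
  "partial_contraction_sequence V Ps k \<longleftrightarrow>
     k \<le> card V \<and>
     Ps (card V) = singleton_partition V \<and>
     (\<forall>i\<in>{k..card V}. partition_on V (Ps i) \<and> card (Ps i) = i) \<and>
     (\<forall>i. k \<le> i \<and> i < card V \<longrightarrow>
        (\<exists>X\<in>Ps (Suc i). \<exists>Y\<in>Ps (Suc i). X \<noteq> Y \<and>
            Ps i = insert (X \<union> Y) (Ps (Suc i) - {X, Y})))"

definition sequence_width ::
  "'a set \<Rightarrow> ('a \<Rightarrow> 'a \<Rightarrow> bool) \<Rightarrow> (nat \<Rightarrow> 'a set set) \<Rightarrow> nat \<Rightarrow> nat" where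
  "sequence_width V E Ps k = Max ((\<lambda>i. max_red_degree E (Ps i)) ` {k..card V})"

end

theory Submission
  imports Defs
begin

lemma pairs_count:
  assumes "finite V" "partition_on V P" "\<forall>W\<in>P. card W \<le> 2"
  shows "card V = card P + card {W\<in>P. card W = 2}"
proof -
  have fP: "finite P" using assms finite_elements by blast
  have fW: "\<And>W. W \<in> P \<Longrightarrow> finite W" using assms partition_onD1 finite_subset by (metis Union_upper)
  have ne: "\<And>W. W \<in> P \<Longrightarrow> W \<noteq> {}" using assms partition_onD3 by blast
  have "card V = sum card P"
    using card_Union_disjoint[of P] partition_onD1[OF assms(2)] partition_onD2[OF assms(2)] fW by auto
  also have "\<dots> = (\<Sum>W\<in>P. 1 + (if card W = 2 then 1 else 0))"
  proof (rule sum.cong)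
    fix W assume "W \<in> P"
    then have "card W \<ge> 1" "card W \<le> 2" using fW ne assms(3) by (auto simp: Suc_le_eq card_gt_0_iff)
    then show "card W = 1 + (if card W = 2 then 1 else 0)" by auto
  qed simp
  also have "\<dots> = card P + card {W\<in>P. card W = 2}"
    by (subst sum.distrib) (simp add: sum.inter_filter[OF fP, symmetric])
  finally show ?thesis .
qed

lemma triple_count:
  assumes fV: "finite V" and sym: "\<forall>u v. E u v \<longrightarrow> E v u"
    and abc: "a \<in> V" "b \<in> V" "c \<in> V" "a \<noteq> b" "a \<noteq> c" "b \<noteq> c"
    and hL: "\<forall>x\<in>V. \<forall>y\<in>V. x \<noteq> y \<longrightarrow> L \<le> card {w\<in>V-{x,y}. E x w \<noteq> E y w}"
  shows "3 * L \<le> 2 * card {w\<in>V-{a,b,c}. \<not> (E a w = E b w \<and> E b w = E c w)} + 2"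
proof -
  let ?V = "V - {a,b,c}"
  have fV': "finite ?V" using fV by auto
  define ind where "ind = (\<lambda>x y w. if E x w \<noteq> E y w then 1 else (0::nat))"
  have r: "card {w\<in>V-{x,y}. E x w \<noteq> E y w} = card {w\<in>?V. E x w \<noteq> E y w} + ind x y z"
    if "x \<in> V" "y \<in> V" "z \<in> V" "x \<noteq> y" "x \<noteq> z" "y \<noteq> z" "{x,y,z} = {a,b,c}" for x y z
  proof (cases "E x z \<noteq> E y z")
    case True
    then have "{w\<in>V-{x,y}. E x w \<noteq> E y w} = insert z {w\<in>?V. E x w \<noteq> E y w}"
      using that by auto
    moreover have "z \<notin> {w\<in>?V. E x w \<noteq> E y w}" using that(7) by blast
    ultimately show ?thesis using True fV' by (simp add: ind_def)
  next
    case False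
    then have "{w\<in>V-{x,y}. E x w \<noteq> E y w} = {w\<in>?V. E x w \<noteq> E y w}"
      using that by auto
    then show ?thesis using False by (simp add: ind_def)
  qed
  have c1: "card {w\<in>?V. E x w \<noteq> E y w} = (\<Sum>w\<in>?V. ind x y w)" for x y
    by (simp add: ind_def sum.inter_filter[OF fV', symmetric])
  have "2 * card {w\<in>?V. \<not> (E a w = E b w \<and> E b w = E c w)}
      = (\<Sum>w\<in>?V. if \<not> (E a w = E b w \<and> E b w = E c w) then 2 else 0)"
    by (simp add: sum.inter_filter[OF fV', symmetric])
  also have "\<dots> = (\<Sum>w\<in>?V. ind a b w + ind a c w + ind b c w)"
    by (rule sum.cong) (auto simp: ind_def)
  also have "\<dots> = card {w\<in>?V. E a w \<noteq> E b w} + card {w\<in>?V. E a w \<noteq> E c w} + card {w\<in>?V. E b w \<noteq> E c w}"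
    unfolding c1 by (simp add: sum.distrib)
  finally have eq: "2 * card {w\<in>?V. \<not> (E a w = E b w \<and> E b w = E c w)} = card {w\<in>?V. E a w \<noteq> E b w} + card {w\<in>?V. E a w \<noteq> E c w} + card {w\<in>?V. E b w \<noteq> E c w}" .
  have r1: "L \<le> card {w\<in>?V. E a w \<noteq> E b w} + ind a b c"
  proof -
    have "L \<le> card {w\<in>V-{a,b}. E a w \<noteq> E b w}" using hL abc by blast
    moreover have "{a,b,c} = {a,b,c}" by auto
    ultimately show ?thesis using r[of a b c] abc by simp
  qed
  have r2: "L \<le> card {w\<in>?V. E a w \<noteq> E c w} + ind a c b"
  proof -
    have "L \<le> card {w\<in>V-{a,c}. E a w \<noteq> E c w}" using hL abc by blast
    moreover have "{a,c,b} = {a,b,c}" by auto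
    ultimately show ?thesis using r[of a c b] abc by simp
  qed
  have r3: "L \<le> card {w\<in>?V. E b w \<noteq> E c w} + ind b c a"
  proof -
    have "L \<le> card {w\<in>V-{b,c}. E b w \<noteq> E c w}" using hL abc by blast
    moreover have "{b,c,a} = {a,b,c}" by auto
    ultimately show ?thesis using r[of b c a] abc by simp
  qed
  have "ind a b c + ind a c b + ind b c a \<le> 2"
    using sym by (auto simp: ind_def)
  then show ?thesis using eq r1 r2 r3 by linarith
qed

lemma three_elems:
  assumes "finite Z" "3 \<le> card Z"
  obtains a b c where "a \<in> Z" "b \<in> Z" "c \<in> Z" "a \<noteq> b" "a \<noteq> c" "b \<noteq> c"
proof -
  obtain a where a: "a \<in> Z" using assms by fastforce
  have c2: "2 \<le> card (Z - {a})" using assms a by simp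
  have "Z - {a} \<noteq> {}"
  proof
    assume h: "Z - {a} = {}"
    have "card (Z - {a}) = 0" by (simp only: h card.empty)
    then show False using c2 by linarith
  qed
  then obtain b where b: "b \<in> Z - {a}" by blast
  have c1: "1 \<le> card (Z - {a} - {b})" using assms a b by simp
  have "Z - {a} - {b} \<noteq> {}"
  proof
    assume h: "Z - {a} - {b} = {}"
    have "card (Z - {a} - {b}) = 0" by (simp only: h card.empty)
    then show False using c1 by linarith
  qed
  then obtain c where c: "c \<in> Z - {a} - {b}" by blast
  show ?thesis using that a b c by blast
qed

lemma step_bound:
  assumes fV: "finite V" and sym: "\<forall>u v. E u v \<longrightarrow> E v u"
    and P: "partition_on V P" and le2: "\<forall>W\<in>P. card W \<le> 2"
    and XY: "X \<in> P" "Y \<in> P" "X \<noteq> Y"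
    and Q: "Q = insert (X \<union> Y) (P - {X, Y})"
    and Z3: "3 \<le> card (X \<union> Y)"
    and hL: "\<forall>x\<in>V. \<forall>y\<in>V. x \<noteq> y \<longrightarrow> L \<le> card {w\<in>V-{x,y}. E x w \<noteq> E y w}"
  shows "3 * L \<le> 2 * red_degree E Q (X \<union> Y) + 2 * card {W\<in>P. card W = 2}"
proof -
  define Z where "Z = X \<union> Y"
  define Pairs where "Pairs = {W\<in>P. card W = 2}"
  have fP: "finite P" using fV P finite_elements by blast
  have fQ: "finite Q" using fP Q by simp
  have subV: "\<And>W. W \<in> P \<Longrightarrow> W \<subseteq> V" using P partition_onD1 by blast
  have fW: "\<And>W. W \<in> P \<Longrightarrow> finite W" using subV fV finite_subset by blast
  have ne: "\<And>W. W \<in> P \<Longrightarrow> W \<noteq> {}" using P partition_onD3 by blast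
  have disj: "\<And>W W'. W \<in> P \<Longrightarrow> W' \<in> P \<Longrightarrow> W \<noteq> W' \<Longrightarrow> W \<inter> W' = {}"
    using partition_onD2[OF P] by (auto simp: disjoint_def)
  have cover: "\<And>w. w \<in> V \<Longrightarrow> \<exists>W\<in>P. w \<in> W" using partition_onD1[OF P] by blast
  have ZV: "Z \<subseteq> V" using subV XY Z_def by auto
  have fZ: "finite Z" using ZV fV finite_subset by blast
  have Z3': "3 \<le> card Z" using Z3 Z_def by simp
  obtain a b c where abc: "a \<in> Z" "b \<in> Z" "c \<in> Z" "a \<noteq> b" "a \<noteq> c" "b \<noteq> c"
    using three_elems[OF fZ] Z3 Z_def by metis
  define D3 where "D3 = {w\<in>V-{a,b,c}. \<not> (E a w = E b w \<and> E b w = E c w)}"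
  have t: "3 * L \<le> 2 * card D3 + 2"
    unfolding D3_def using triple_count[OF fV sym, of a b c L] abc ZV hL by blast
  define D where "D = D3 - Z"
  have fD3: "finite D3" using fV D3_def by simp
  have cD: "card D + card Z \<ge> card D3 + 3"
  proof -
    have "D = D3 - (Z - {a,b,c})" using D_def D3_def by auto
    then have "card D \<ge> card D3 - card (Z - {a,b,c})" by (simp add: diff_card_le_card_Diff fZ)
    moreover have "card (Z - {a,b,c}) = card Z - 3" using abc fZ by (simp add: card_Diff_subset)
    ultimately show ?thesis using Z3' by linarith
  qed
  have cXY: "card X + card Y = card Z"
    using disj[OF XY] fW XY Z_def by (simp add: card_Un_disjoint)
  have cPairs: "card (Pairs - {X,Y}) + card Z = card Pairs + 2"
  proof -
    have "card X \<le> 2" "card Y \<le> 2" "card X \<ge> 1" "card Y \<ge> 1"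
      using le2 XY ne fW by (auto simp: Suc_le_eq card_gt_0_iff)
    have fPa: "finite Pairs" using fP Pairs_def by simp
    have "card (Pairs - {X,Y}) = card Pairs - card (Pairs \<inter> {X,Y})"
      using fPa by (simp add: card_Diff_subset_Int)
    moreover have "card (Pairs \<inter> {X,Y}) \<le> card Pairs" using fPa by (simp add: card_mono)
    moreover have "card (Pairs \<inter> {X,Y}) + 2 = card Z"
    proof -
      consider "card X = 1" "card Y = 2" | "card X = 2" "card Y = 1" | "card X = 2" "card Y = 2"
        using \<open>card X \<le> 2\<close> \<open>card Y \<le> 2\<close> \<open>card X \<ge> 1\<close> \<open>card Y \<ge> 1\<close> cXY Z3' by linarith
      then show ?thesis
      proof cases
        case 1 then have "Pairs \<inter> {X,Y} = {Y}" using XY Pairs_def by auto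
        then show ?thesis using 1 cXY by simp
      next
        case 2 then have "Pairs \<inter> {X,Y} = {X}" using XY Pairs_def by auto
        then show ?thesis using 2 cXY by simp
      next
        case 3 then have "Pairs \<inter> {X,Y} = {X,Y}" using XY Pairs_def by auto
        then show ?thesis using 3 cXY XY by simp
      qed
    qed
    ultimately show ?thesis by linarith
  qed
  define R where "R = {W \<in> P - {X,Y}. W \<inter> D \<noteq> {}}"
  have fR: "finite R" using fP R_def by simp
  have R_red: "card R \<le> red_degree E Q Z"
  proof -
    have "R \<subseteq> {W \<in> Q. W \<noteq> Z \<and> red_edge E Z W}"
    proof
      fix W assume W: "W \<in> R"
      then have WP: "W \<in> P" "W \<noteq> X" "W \<noteq> Y" using R_def by auto
      obtain w where w: "w \<in> W" "w \<in> D" using W R_def by auto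
      have "W \<inter> X = {}" using disj WP XY by blast
      then have "W \<noteq> Z" using Z_def ne XY by blast
      moreover have "W \<in> Q" using Q WP by auto
      moreover have "red_edge E Z W"
      proof -
        have "\<not> (E a w = E b w \<and> E b w = E c w)" using w D_def D3_def by auto
        then have "\<exists>x\<in>Z. E x w" "\<exists>x\<in>Z. \<not> E x w" using abc by blast+
        then show ?thesis unfolding red_edge_def using w by blast
      qed
      ultimately show "W \<in> {W \<in> Q. W \<noteq> Z \<and> red_edge E Z W}" by blast
    qed
    then show ?thesis unfolding red_degree_def using fQ by (simp add: card_mono)
  qed
  have DR: "card D \<le> card R + card (Pairs - {X,Y})"
  proof -
    have "D = (\<Union>W\<in>R. W \<inter> D)"
    proof
      show "D \<subseteq> (\<Union>W\<in>R. W \<inter> D)"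
      proof
        fix w assume w: "w \<in> D"
        then have "w \<in> V" "w \<notin> Z" using D_def D3_def by auto
        then obtain W where "W \<in> P" "w \<in> W" using cover by blast
        moreover have "W \<noteq> X" "W \<noteq> Y" using \<open>w \<notin> Z\<close> \<open>w \<in> W\<close> Z_def by auto
        ultimately show "w \<in> (\<Union>W\<in>R. W \<inter> D)" using w R_def by blast
      qed
    qed auto
    then have "card D \<le> (\<Sum>W\<in>R. card (W \<inter> D))" by (metis card_UN_le fR)
    also have "\<dots> \<le> (\<Sum>W\<in>R. 1 + (if W \<in> Pairs then 1 else 0))"
    proof (rule sum_mono)
      fix W assume "W \<in> R"
      then have "W \<in> P" using R_def by auto
      then have "card (W \<inter> D) \<le> card W" "card W \<le> 2" using fW le2 by (auto intro: card_mono)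
      then show "card (W \<inter> D) \<le> 1 + (if W \<in> Pairs then 1 else 0)"
        using Pairs_def \<open>W \<in> P\<close> by auto
    qed
    also have "\<dots> = card R + card {W\<in>R. W \<in> Pairs}"
      by (subst sum.distrib) (simp add: sum.inter_filter[OF fR, symmetric])
    also have "{W\<in>R. W \<in> Pairs} = R \<inter> Pairs" by blast
    also have "card (R \<inter> Pairs) \<le> card (Pairs - {X,Y})"
      using fP Pairs_def R_def by (intro card_mono) auto
    finally show ?thesis by simp
  qed
  show ?thesis using t cD cPairs R_red DR unfolding Z_def[symmetric] Pairs_def[symmetric] by linarith
qed

lemma lb1_le:
  assumes "finite V" "x \<in> V" "y \<in> V" "x \<noteq> y"
  shows "lb1 V E \<le> max_red_degree E (pair_partition V x y)"
proof -
  have "{max_red_degree E (pair_partition V u v) | u v. u \<in> V \<and> v \<in> V \<and> u \<noteq> v}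
      \<subseteq> (\<lambda>(u,v). max_red_degree E (pair_partition V u v)) ` (V \<times> V)" by auto
  then have "finite {max_red_degree E (pair_partition V u v) | u v. u \<in> V \<and> v \<in> V \<and> u \<noteq> v}"
    using assms(1) finite_subset by blast
  then show ?thesis unfolding lb1_def using assms by (intro Min_le) blast+
qed

lemma mrd_pp:
  assumes fV: "finite V" and xy: "x \<in> V" "y \<in> V" "x \<noteq> y"
  shows "max_red_degree E (pair_partition V x y) \<le> max (card {w\<in>V-{x,y}. E x w \<noteq> E y w}) 1"
proof -
  define Dxy where "Dxy = {w\<in>V-{x,y}. E x w \<noteq> E y w}"
  have fpp: "finite (pair_partition V x y)"
  proof -
    have "pair_partition V x y = insert {x,y} ((\<lambda>w. {w}) ` (V - {x,y}))"
      unfolding pair_partition_def by auto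
    then show ?thesis using fV by simp
  qed
  have "red_degree E (pair_partition V x y) U \<le> max (card Dxy) 1" if U: "U \<in> pair_partition V x y" for U
  proof (cases "U = {x,y}")
    case True
    have "{W \<in> pair_partition V x y. W \<noteq> U \<and> red_edge E U W} \<subseteq> (\<lambda>w. {w}) ` Dxy"
    proof
      fix W assume W: "W \<in> {W \<in> pair_partition V x y. W \<noteq> U \<and> red_edge E U W}"
      then obtain w where w: "W = {w}" "w \<in> V - {x,y}" using True unfolding pair_partition_def by auto
      then have "E x w \<noteq> E y w" using W True unfolding red_edge_def by auto
      then show "W \<in> (\<lambda>w. {w}) ` Dxy" using w Dxy_def by auto
    qed
    then have "red_degree E (pair_partition V x y) U \<le> card ((\<lambda>w. {w}) ` Dxy)"
      unfolding red_degree_def using fV Dxy_def by (intro card_mono) auto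
    also have "\<dots> \<le> card Dxy" by (rule card_image_le) (simp add: Dxy_def fV)
    finally show ?thesis by simp
  next
    case False
    then obtain u where u: "U = {u}" using U unfolding pair_partition_def by auto
    have "{W \<in> pair_partition V x y. W \<noteq> U \<and> red_edge E U W} \<subseteq> {{x,y}}"
    proof
      fix W assume W: "W \<in> {W \<in> pair_partition V x y. W \<noteq> U \<and> red_edge E U W}"
      show "W \<in> {{x,y}}"
      proof (rule ccontr)
        assume "W \<notin> {{x,y}}"
        then obtain w where "W = {w}" using W unfolding pair_partition_def by auto
        then show False using W u unfolding red_edge_def by auto
      qed
    qed
    then have "red_degree E (pair_partition V x y) U \<le> card {{x,y}}"
      unfolding red_degree_def by (intro card_mono) auto
    then show ?thesis by simp
  qed
  then show ?thesis unfolding max_red_degree_def Dxy_def[symmetric] using fpp by (subst Max_le_iff) auto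
qed

theorem mainTheorem17:
  fixes V :: "'a set" and E :: "'a \<Rightarrow> 'a \<Rightarrow> bool"
    and n d lam mu k :: nat and Ps :: "nat \<Rightarrow> 'a set set"
  assumes "strongly_regular V E n d lam mu"
    and "n \<ge> 2"
    and "partial_contraction_sequence V Ps k"
    and "sequence_width V E Ps k \<le> lb1 V E"
  shows "\<forall>i. k \<le> i \<and> i \<le> n \<and> real i \<ge> real n - of_int \<lceil>real (lb1 V E) / 2\<rceil>
           \<longrightarrow> (\<forall>P\<in>Ps i. card P \<le> 2)"
proof (intro allI impI)
  fix i assume hi: "k \<le> i \<and> i \<le> n \<and> real i \<ge> real n - of_int \<lceil>real (lb1 V E) / 2\<rceil>"
  define L where "L = lb1 V E"
  define C where "C = \<lceil>real L / 2\<rceil>"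
  have sg: "simple_graph V E" and nV: "card V = n" using assms(1) unfolding strongly_regular_def by auto
  have fV: "finite V" and sym: "\<forall>u v. E u v \<longrightarrow> E v u" using sg unfolding simple_graph_def by auto
  have pcs: "k \<le> n" "\<forall>i\<in>{k..n}. partition_on V (Ps i) \<and> card (Ps i) = i"
     "\<forall>i. k \<le> i \<and> i < n \<longrightarrow>
        (\<exists>X\<in>Ps (Suc i). \<exists>Y\<in>Ps (Suc i). X \<noteq> Y \<and>
            Ps i = insert (X \<union> Y) (Ps (Suc i) - {X, Y}))"
     "Ps n = singleton_partition V"
    using assms(3) nV unfolding partial_contraction_sequence_def by auto
  have C1: "int n - int i \<le> C"
  proof -
    have "real_of_int (int n - int i) \<le> real_of_int C" using hi C_def L_def by simp
    then show ?thesis by linarith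
  qed
  have C2: "2 * C \<le> int L + 1"
  proof -
    have "real_of_int C - 1 < real L / 2" using ceiling_correct C_def by blast
    then have "real_of_int (2 * C) < real_of_int (int L + 2)" by simp
    then show ?thesis by linarith
  qed
  have width: "max_red_degree E (Ps j) \<le> L" if "k \<le> j" "j \<le> n" for j
  proof -
    have "max_red_degree E (Ps j) \<le> sequence_width V E Ps k"
      unfolding sequence_width_def using that nV by (intro Max_ge) auto
    then show ?thesis using assms(4) L_def by simp
  qed
  have main: "\<forall>P\<in>Ps (n - dd). card P \<le> 2" if "dd \<le> n - i" for dd
    using that
  proof (induction dd)
    case 0
    then show ?case using pcs(4) unfolding singleton_partition_def by auto
  next
    case (Suc dd)
    define j where "j = n - Suc dd"
    have j: "Suc j = n - dd" "k \<le> j" "j < n" using Suc.prems hi j_def by auto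
    have IH: "\<forall>P\<in>Ps (Suc j). card P \<le> 2" using Suc j by simp
    obtain X Y where XY: "X \<in> Ps (Suc j)" "Y \<in> Ps (Suc j)" "X \<noteq> Y"
      and Pj: "Ps j = insert (X \<union> Y) (Ps (Suc j) - {X, Y})" using pcs(3) j by blast
    have part: "partition_on V (Ps (Suc j))" "card (Ps (Suc j)) = Suc j"
      using pcs(2) j by auto
    have pc: "card V = card (Ps (Suc j)) + card {W\<in>Ps (Suc j). card W = 2}"
      by (rule pairs_count[OF fV part(1) IH])
    then have npairs: "card {W\<in>Ps (Suc j). card W = 2} = dd" using part(2) nV j by simp
    have "card (X \<union> Y) \<le> 2"
    proof (rule ccontr)
      assume "\<not> card (X \<union> Y) \<le> 2"
      then have Z3: "3 \<le> card (X \<union> Y)" by simp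
      show False
      proof (cases "dd = 0")
        case True
        have fS: "finite (Ps (Suc j))" using finite_elements[OF fV part(1)] .
        have "{W\<in>Ps (Suc j). card W = 2} = {}" using npairs True fS by simp
        then have "card X \<noteq> 2" "card Y \<noteq> 2" using XY by blast+
        then have "card X \<le> 1" "card Y \<le> 1" using IH XY by fastforce+
        then show False using Z3 card_Un_le[of X Y] by linarith
      next
        case False
        then have "2 \<le> C" using C1 Suc.prems by linarith
        then have L3: "3 \<le> L" using C2 by linarith
        have hL: "\<forall>x\<in>V. \<forall>y\<in>V. x \<noteq> y \<longrightarrow> L \<le> card {w\<in>V-{x,y}. E x w \<noteq> E y w}"
        proof (intro ballI impI)
          fix x y assume "x \<in> V" "y \<in> V" "x \<noteq> y"
          then have "L \<le> max (card {w\<in>V-{x,y}. E x w \<noteq> E y w}) 1"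
            using lb1_le[OF fV, of x y E] mrd_pp[OF fV, of x y E] L_def by linarith
          then show "L \<le> card {w\<in>V-{x,y}. E x w \<noteq> E y w}" using L3 by linarith
        qed
        have sb: "3 * L \<le> 2 * red_degree E (Ps j) (X \<union> Y) + 2 * dd"
          using step_bound[OF fV sym part(1) IH XY Pj Z3 hL] npairs by simp
        have "partition_on V (Ps j)" using pcs(2) j by auto
        then have fPj: "finite (Ps j)" using fV finite_elements by blast
        have "red_degree E (Ps j) (X \<union> Y) \<le> max_red_degree E (Ps j)"
          unfolding max_red_degree_def using fPj Pj by (intro Max_ge) auto
        also have "\<dots> \<le> L" using width j by simp
        finally have "red_degree E (Ps j) (X \<union> Y) \<le> L" .
        moreover have "int (Suc dd) \<le> C" using C1 Suc.prems by linarith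
        ultimately show False using sb C2 by linarith
      qed
    qed
    then show ?case using Pj IH j_def by auto
  qed
  have "i = n - (n - i)" using hi by simp
  then show "\<forall>P\<in>Ps i. card P \<le> 2" using main[of "n - i"] by simp
qed

end
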